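(* Let $\{\mathsf{f}(\mathsf{x},n)\}$ be a probability distribution on $\mathbb{Z}^d\times\mathbb{N}$ satisfying the assumptions in the context, and let $\lambda(\xi)$ be the analytic function defined in the context. Then the $d\times d$ matrix $\Xi=\mathrm{Hess}(\lambda)(0)$ is positive definite.
   Context: $\mathbb{N}=\{1,2,\dots\}$. Assumptions: the random vector $(\mathsf{X},\mathsf{T})$ with law $\mathsf{f}$ has a non-degenerate $(d+1)$-dimensional distribution; the random walk with i.i.d. steps of law $\mathsf{f}$ is aperiodic (support not contained in a proper sub-lattice); and there exist $C<\infty,\nu>0$ with $\mathsf{f}(\mathsf{x},n)\le Ce^{-\nu(|\mathsf{x}|+n)}$. Define $F(\xi,\lambda)=\log\sum_{\mathsf{x},n}e^{\mathsf{x}\cdot\xi-\lambda n}\mathsf{f}(\mathsf{x},n)$, analytic near $0\in\mathbb{C}^{d+1}$, and let $\lambda(\xi)$ be the analytic function near $0\in\mathbb{C}^d$ given by the implicit function theorem with $F(\xi,\lambda)=0\Leftrightarrow\lambda=\lambda(\xi)$ near the origin (so $\lambda(0)=0$). *)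

theory Defs
  imports "HOL-Analysis.Analysis"
begin

definition zvec :: "int ^ 'd \<Rightarrow> real ^ 'd" where
  "zvec x = (\<chi> i. real_of_int (x $ i))"

text \<open>The log moment generating function F(xi, lambda), restricted to real arguments.\<close>
definition logF :: "(int ^ 'd \<Rightarrow> nat \<Rightarrow> real) \<Rightarrow> real ^ 'd \<Rightarrow> real \<Rightarrow> real" where
  "logF f \<xi> l = ln (\<Sum>\<^sub>\<infinity>p\<in>UNIV. exp (zvec (fst p) \<bullet> \<xi> - l * real (snd p)) * f (fst p) (snd p))"

inductive_set gen_subgroup :: "'a::ab_group_add set \<Rightarrow> 'a set" for S where
  zero: "0 \<in> gen_subgroup S"
| base: "a \<in> S \<Longrightarrow> a \<in> gen_subgroup S"
| diff: "a \<in> gen_subgroup S \<Longrightarrow> b \<in> gen_subgroup S \<Longrightarrow> a - b \<in> gen_subgroup S"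

definition support :: "(int ^ 'd \<Rightarrow> nat \<Rightarrow> real) \<Rightarrow> ((int ^ 'd) \<times> int) set" where
  "support f = {(x, int n) | x n. f x n > 0}"

definition hessian_at :: "(real ^ 'd \<Rightarrow> real) \<Rightarrow> real ^ 'd \<Rightarrow> real ^ 'd ^ 'd \<Rightarrow> bool" where
  "hessian_at lam \<xi>0 H \<longleftrightarrow>
     (\<exists>U. open U \<and> \<xi>0 \<in> U \<and> (\<forall>\<xi>\<in>U. lam differentiable (at \<xi>)) \<and>
       ((\<lambda>\<xi>. \<chi> i. frechet_derivative lam (at \<xi>) (axis i 1)) has_derivative (\<lambda>h. H *v h)) (at \<xi>0))"

definition pos_def :: "real ^ 'd ^ 'd \<Rightarrow> bool" where
  "pos_def H \<longleftrightarrow> (\<forall>v. v \<noteq> 0 \<longrightarrow> v \<bullet> (H *v v) > 0)"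

end

theory Submission
  imports Defs
begin

lemma geom_fin_bound:
  fixes q :: real
  assumes "0 \<le> q" "q < 1" "finite J"
  shows "(\<Sum>j\<in>J. q ^ j) \<le> 1 / (1 - q)"
proof -
  have "(\<Sum>j\<in>J. q ^ j) \<le> suminf (\<lambda>j. q ^ j)"
    by (rule sum_le_suminf) (use assms in \<open>auto intro: summable_geometric\<close>)
  also have "\<dots> = 1 / (1 - q)" using assms by (simp add: suminf_geometric)
  finally show ?thesis .
qed

lemma int_fin_bound:
  fixes a :: real
  assumes "a > 0" "finite K"
  shows "(\<Sum>k\<in>K. exp (- a * \<bar>real_of_int k\<bar>)) \<le> 2 / (1 - exp (- a))"
proof -
  define q where "q = exp (- a)"
  have q: "0 \<le> q" "q < 1" using assms by (auto simp: q_def)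
  have e: "exp (- a * real m) = q ^ m" for m :: nat
    by (simp add: q_def flip: exp_of_nat_mult)
  have "(\<Sum>k\<in>K. exp (- a * \<bar>real_of_int k\<bar>)) \<le>
        (\<Sum>k\<in>K. (if k \<ge> 0 then q ^ nat k else 0) + (if k < 0 then q ^ nat (-k) else 0))"
  proof (rule sum_mono)
    fix k assume "k \<in> K"
    show "exp (- a * \<bar>real_of_int k\<bar>) \<le> (if k \<ge> 0 then q ^ nat k else 0) + (if k < 0 then q ^ nat (-k) else 0)"
    proof (cases "k \<ge> 0")
      case True
      then have "\<bar>real_of_int k\<bar> = real (nat k)" by simp
      then show ?thesis using True e[of "nat k"] by simp
    next
      case False
      then have "\<bar>real_of_int k\<bar> = real (nat (-k))" by simp
      then show ?thesis using False e[of "nat (-k)"] by simp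
    qed
  qed
  also have "\<dots> = (\<Sum>k\<in>K \<inter> {k. k \<ge> 0}. q ^ nat k) + (\<Sum>k\<in>K \<inter> {k. k < 0}. q ^ nat (-k))"
    by (simp add: sum.distrib sum.inter_restrict assms(2))
  also have "(\<Sum>k\<in>K \<inter> {k. k \<ge> 0}. q ^ nat k) = (\<Sum>j\<in>nat ` (K \<inter> {k. k \<ge> 0}). q ^ j)"
    by (rule sum.reindex_cong[symmetric]) (auto simp: inj_on_def)
  also have "(\<Sum>k\<in>K \<inter> {k. k < 0}. q ^ nat (-k)) = (\<Sum>j\<in>(\<lambda>k. nat (-k)) ` (K \<inter> {k. k < 0}). q ^ j)"
    by (rule sum.reindex_cong[symmetric]) (auto simp: inj_on_def)
  also have "(\<Sum>j\<in>nat ` (K \<inter> {k. k \<ge> 0}). q ^ j) + (\<Sum>j\<in>(\<lambda>k. nat (-k)) ` (K \<inter> {k. k < 0}). q ^ j)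
      \<le> 1 / (1 - q) + 1 / (1 - q)"
    by (intro add_mono geom_fin_bound) (use q assms in auto)
  finally show ?thesis by (simp add: q_def)
qed

lemma nat_fin_bound:
  fixes a :: real
  assumes "a > 0" "finite K"
  shows "(\<Sum>k\<in>K. exp (- a * real k)) \<le> 1 / (1 - exp (- a))"
proof -
  have "exp (- a * real m) = exp (-a) ^ m" for m :: nat
    by (simp flip: exp_of_nat_mult)
  then show ?thesis using geom_fin_bound[of "exp (-a)" K] assms by simp
qed

lemma lattice_fin_bound:
  fixes \<epsilon> :: real
  assumes "\<epsilon> > 0"
  shows "\<exists>S. \<forall>F::(int^'d::finite) set. finite F \<longrightarrow> (\<Sum>x\<in>F. exp (- \<epsilon> * norm (zvec x))) \<le> S"
proof -
  define N where "N = real CARD('d)"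
  have N: "N > 0" by (simp add: N_def)
  define a where "a = \<epsilon> / N"
  have a: "a > 0" using N assms by (simp add: a_def)
  define h where "h k = exp (- a * \<bar>real_of_int k\<bar>)" for k :: int
  define S1 where "S1 = 2 / (1 - exp (- a))"
  have hS: "sum h K \<le> S1" if "finite K" for K
    using int_fin_bound[OF a that] by (simp add: h_def S1_def)
  have hpos: "h k \<ge> 0" for k by (simp add: h_def)
  have S1pos: "S1 \<ge> 0" using hS[of "{}"] by simp
  have "(\<Sum>x\<in>F. exp (- \<epsilon> * norm (zvec x))) \<le> S1 ^ CARD('d)" if F: "finite F" for F :: "(int^'d) set"
  proof -
    define K where "K = (\<Union>i. (\<lambda>x. x $ i) ` F)"
    have finK: "finite K" using F by (auto simp: K_def)
    have pt: "exp (- \<epsilon> * norm (zvec x)) \<le> (\<Prod>i\<in>UNIV. h (x $ i))" for x :: "int^'d"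
    proof -
      have "(\<Sum>i\<in>UNIV. a * \<bar>real_of_int (x $ i)\<bar>) \<le> (\<Sum>i\<in>(UNIV::'d set). a * norm (zvec x))"
        by (rule sum_mono) (use a component_le_norm_cart[of "zvec x"] in \<open>auto simp: zvec_def intro!: mult_left_mono\<close>)
      also have "\<dots> = \<epsilon> * norm (zvec x)" using N by (simp add: a_def N_def)
      finally have "- \<epsilon> * norm (zvec x) \<le> (\<Sum>i\<in>UNIV. - a * \<bar>real_of_int (x $ i)\<bar>)"
        by (simp add: sum_negf)
      then have "exp (- \<epsilon> * norm (zvec x)) \<le> exp (\<Sum>i\<in>UNIV. - a * \<bar>real_of_int (x $ i)\<bar>)"
        by simp
      also have "\<dots> = (\<Prod>i\<in>UNIV. h (x $ i))" by (simp add: exp_sum h_def)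
      finally show ?thesis .
    qed
    have "(\<Sum>x\<in>F. exp (- \<epsilon> * norm (zvec x))) \<le> (\<Sum>x\<in>F. \<Prod>i\<in>UNIV. h (x $ i))"
      by (rule sum_mono) (rule pt)
    also have "\<dots> \<le> (\<Sum>x\<in>vec_lambda ` (PiE UNIV (\<lambda>_. K)). \<Prod>i\<in>(UNIV::'d set). h (x $ i))"
    proof -
      have fin: "finite (vec_lambda ` (PiE UNIV (\<lambda>_. K)) :: (int^'d) set)" using finK by (simp add: finite_PiE)
      have sub: "F \<subseteq> vec_lambda ` (PiE UNIV (\<lambda>_. K))"
      proof
        fix x assume "x \<in> F"
        then have "(\<lambda>i. x $ i) \<in> PiE UNIV (\<lambda>_. K)" by (auto simp: K_def)
        moreover have "x = vec_lambda (\<lambda>i. x $ i)" by simp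
        ultimately show "x \<in> vec_lambda ` (PiE UNIV (\<lambda>_. K))" by blast
      qed
      show ?thesis using fin sub by (intro sum_mono2) (auto simp: hpos prod_nonneg)
    qed
    also have "\<dots> = (\<Sum>g\<in>PiE (UNIV::'d set) (\<lambda>_. K). \<Prod>i\<in>UNIV. h (g i))"
      by (subst sum.reindex) (auto simp: inj_on_def vec_lambda_inject)
    also have "\<dots> = (\<Prod>i\<in>(UNIV::'d set). \<Sum>k\<in>K. h k)"
      by (rule prod_sum_PiE[symmetric]) (use finK in auto)
    also have "\<dots> \<le> (\<Prod>i\<in>(UNIV::'d set). S1)"
      by (rule prod_mono) (use hS finK hpos in \<open>auto intro: sum_nonneg\<close>)
    also have "\<dots> = S1 ^ CARD('d)" by simp
    finally show ?thesis .
  qed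
  then show ?thesis by blast
qed

lemma lattice_summable:
  fixes \<epsilon> :: real
  assumes "\<epsilon> > 0"
  shows "(\<lambda>p::(int^'d::finite) \<times> nat. exp (- \<epsilon> * (norm (zvec (fst p)) + real (snd p)))) summable_on UNIV"
proof (rule nonneg_bdd_above_summable_on)
  obtain S1 where S1: "\<And>F::(int^'d) set. finite F \<Longrightarrow> (\<Sum>x\<in>F. exp (- \<epsilon> * norm (zvec x))) \<le> S1"
    using lattice_fin_bound[OF assms] by blast
  define S2 where "S2 = 1 / (1 - exp (- \<epsilon>))"
  have S2: "(\<Sum>k\<in>K. exp (- \<epsilon> * real k)) \<le> S2" if "finite K" for K
    using nat_fin_bound[OF assms that] by (simp add: S2_def)
  have S1pos: "S1 \<ge> 0" using S1[of "{}"] by simp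
  show "bdd_above (sum (\<lambda>p::(int^'d) \<times> nat. exp (- \<epsilon> * (norm (zvec (fst p)) + real (snd p)))) ` {F. F \<subseteq> UNIV \<and> finite F})"
  proof (rule bdd_aboveI2)
    fix F :: "((int^'d) \<times> nat) set"
    assume "F \<in> {F. F \<subseteq> UNIV \<and> finite F}"
    then have F: "finite F" by simp
    have fin: "finite (fst ` F \<times> snd ` F)" using F by simp
    have sub: "F \<subseteq> fst ` F \<times> snd ` F" by force
    have "(\<Sum>p\<in>F. exp (- \<epsilon> * (norm (zvec (fst p)) + real (snd p))))
        \<le> (\<Sum>p\<in>fst ` F \<times> snd ` F. exp (- \<epsilon> * (norm (zvec (fst p)) + real (snd p))))"
      using fin sub by (intro sum_mono2) auto
    also have "\<dots> = (\<Sum>p\<in>fst ` F \<times> snd ` F. exp (- \<epsilon> * norm (zvec (fst p))) * exp (- \<epsilon> * real (snd p)))"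
      by (simp add: algebra_simps flip: exp_add)
    also have "\<dots> = (\<Sum>x\<in>fst ` F. exp (- \<epsilon> * norm (zvec x))) * (\<Sum>n\<in>snd ` F. exp (- \<epsilon> * real n))"
      unfolding sum_product sum.cartesian_product by (simp add: case_prod_beta)
    also have "\<dots> \<le> S1 * S2"
      by (rule mult_mono) (use S1 S2 F S1pos in \<open>auto intro: sum_nonneg\<close>)
    finally show "(\<Sum>p\<in>F. exp (- \<epsilon> * (norm (zvec (fst p)) + real (snd p)))) \<le> S1 * S2" .
  qed
qed auto

definition bv :: "(int^'d::finite) \<times> nat \<Rightarrow> (real^'d) \<times> real" where
  "bv p = (zvec (fst p), - real (snd p))"

definition Psi :: "((int^'d::finite) \<times> nat \<Rightarrow> real) \<Rightarrow> (real^'d) \<times> real \<Rightarrow> real" where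
  "Psi c z = (\<Sum>\<^sub>\<infinity>p. c p * exp (bv p \<bullet> z))"

definition good :: "((int^'d::finite) \<times> nat \<Rightarrow> real) \<Rightarrow> real \<Rightarrow> bool" where
  "good c r \<longleftrightarrow> (\<forall>\<rho>. 0 \<le> \<rho> \<longrightarrow> \<rho> < r \<longrightarrow> (\<lambda>p. \<bar>c p\<bar> * exp (norm (bv p) * \<rho>)) summable_on UNIV)"

lemma norm_bv_le: "norm (bv p) \<le> norm (zvec (fst p)) + real (snd p)"
  using norm_Pair_le[of "zvec (fst p)" "- real (snd p)"] by (simp add: bv_def)

lemma good_dom:
  fixes c d :: "(int^'d::finite) \<times> nat \<Rightarrow> real"
  assumes g: "good c r" and d: "\<And>p. \<bar>d p\<bar> \<le> \<bar>c p\<bar> * (A + B * norm (bv p))"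
    and A: "A \<ge> 0" and B: "B \<ge> 0"
  shows "good d r"
  unfolding good_def
proof (intro allI impI)
  fix \<rho> :: real assume \<rho>: "0 \<le> \<rho>" "\<rho> < r"
  define \<delta> where "\<delta> = (r - \<rho>) / 2"
  have \<delta>: "\<delta> > 0" using \<rho> by (simp add: \<delta>_def)
  have r: "0 \<le> \<rho> + \<delta>" "\<rho> + \<delta> < r" using \<rho> \<delta> by (auto simp: \<delta>_def field_simps)
  have s: "(\<lambda>p. \<bar>c p\<bar> * exp (norm (bv p) * (\<rho> + \<delta>))) summable_on UNIV"
    using g r unfolding good_def by blast
  then have s2: "(\<lambda>p. (A + B / \<delta>) * (\<bar>c p\<bar> * exp (norm (bv p) * (\<rho> + \<delta>)))) summable_on UNIV"
    by (rule summable_on_cmult_right)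
  show "(\<lambda>p. \<bar>d p\<bar> * exp (norm (bv p) * \<rho>)) summable_on UNIV"
  proof (rule summable_on_comparison_test[OF s2])
    fix p :: "(int^'d) \<times> nat"
    define t where "t = norm (bv p)"
    have t: "t \<ge> 0" by (simp add: t_def)
    have tb: "t \<le> exp (\<delta> * t) / \<delta>"
    proof -
      have "\<delta> * t \<le> exp (\<delta> * t)" using exp_ge_add_one_self[of "\<delta> * t"] by linarith
      then show ?thesis using \<delta> by (simp add: field_simps)
    qed
    have E: "exp (t * (\<rho> + \<delta>)) = exp (t * \<rho>) * exp (\<delta> * t)"
      by (simp add: algebra_simps flip: exp_add)
    have E1: "exp (t * \<rho>) \<le> exp (t * (\<rho> + \<delta>))"
      using t \<delta> by (simp add: mult_left_mono)
    have "\<bar>d p\<bar> * exp (t * \<rho>) \<le> \<bar>c p\<bar> * (A + B * t) * exp (t * \<rho>)"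
      using d[of p] by (simp add: t_def mult_right_mono)
    also have "\<dots> = \<bar>c p\<bar> * (A * exp (t * \<rho>) + B * t * exp (t * \<rho>))"
      by (simp add: algebra_simps)
    also have "\<dots> \<le> \<bar>c p\<bar> * (A * exp (t * (\<rho> + \<delta>)) + B * (exp (\<delta> * t) / \<delta>) * exp (t * \<rho>))"
      by (intro mult_left_mono add_mono mult_right_mono E1 tb) (use A B in auto)
    also have "\<dots> = (A + B / \<delta>) * (\<bar>c p\<bar> * exp (t * (\<rho> + \<delta>)))"
      using \<delta> by (simp add: E field_simps exp_add)
    finally show "\<bar>d p\<bar> * exp (norm (bv p) * \<rho>) \<le> (A + B / \<delta>) * (\<bar>c p\<bar> * exp (norm (bv p) * (\<rho> + \<delta>)))"
      by (simp add: t_def)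
  qed auto
qed

lemma good_mult: "good c r \<Longrightarrow> good (\<lambda>p. c p * (bv p \<bullet> v)) r"
proof (rule good_dom[where A = 0 and B = "norm v"])
  fix p
  have "\<bar>bv p \<bullet> v\<bar> \<le> norm (bv p) * norm v" by (rule Cauchy_Schwarz_ineq2)
  then show "\<bar>c p * (bv p \<bullet> v)\<bar> \<le> \<bar>c p\<bar> * (0 + norm v * norm (bv p))"
    by (simp add: abs_mult mult_left_mono mult.commute)
qed auto

lemma good_cmult: "good c r \<Longrightarrow> good (\<lambda>p. a * c p) r"
  by (rule good_dom[where A = "\<bar>a\<bar>" and B = 0]) (auto simp: abs_mult)

lemma good_uminus: "good c r \<Longrightarrow> good (\<lambda>p. - c p) r"
  by (rule good_dom[where A = 1 and B = 0]) auto

lemma good_add: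
  assumes "good c r" "good d r"
  shows "good (\<lambda>p. c p + d p) r"
  unfolding good_def
proof (intro allI impI)
  fix \<rho> :: real assume \<rho>: "0 \<le> \<rho>" "\<rho> < r"
  have s: "(\<lambda>p. \<bar>c p\<bar> * exp (norm (bv p) * \<rho>) + \<bar>d p\<bar> * exp (norm (bv p) * \<rho>)) summable_on UNIV"
    using assms \<rho> unfolding good_def by (intro summable_on_add) auto
  show "(\<lambda>p. \<bar>c p + d p\<bar> * exp (norm (bv p) * \<rho>)) summable_on UNIV"
    by (rule summable_on_comparison_test[OF s]) (auto simp flip: distrib_right intro: mult_right_mono abs_triangle_ineq)
qed

lemma good_diff: "good c r \<Longrightarrow> good d r \<Longrightarrow> good (\<lambda>p. c p - d p) r"
  using good_add[of c r "\<lambda>p. - d p"] good_uminus[of d r] by simp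

lemma good_zero: "good (\<lambda>p. 0) r"
  by (simp add: good_def)

lemma good_sum:
  assumes "finite I" "\<And>i. i \<in> I \<Longrightarrow> good (c i) r"
  shows "good (\<lambda>p. \<Sum>i\<in>I. c i p) r"
  using assms by (induction I rule: finite_induct) (auto simp: good_zero intro!: good_add)

lemma good_abs_summable:
  assumes g: "good c r" and z: "norm z < r"
  shows "(\<lambda>p. norm (c p * exp (bv p \<bullet> z))) summable_on UNIV"
proof -
  have s: "(\<lambda>p. \<bar>c p\<bar> * exp (norm (bv p) * norm z)) summable_on UNIV"
    using g z unfolding good_def by auto
  show ?thesis
  proof (rule summable_on_comparison_test[OF s])
    fix p
    have "bv p \<bullet> z \<le> norm (bv p) * norm z" by (rule norm_cauchy_schwarz)
    then show "norm (c p * exp (bv p \<bullet> z)) \<le> \<bar>c p\<bar> * exp (norm (bv p) * norm z)"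
      by (simp add: abs_mult mult_left_mono)
  qed auto
qed

lemma good_summable:
  assumes "good c r" "norm z < r"
  shows "(\<lambda>p. c p * exp (bv p \<bullet> z)) summable_on UNIV"
  by (rule abs_summable_summable[OF good_abs_summable[OF assms]])

lemma Psi_add:
  assumes "good c r" "good d r" "norm z < r"
  shows "Psi (\<lambda>p. c p + d p) z = Psi c z + Psi d z"
  unfolding Psi_def distrib_right
  by (rule infsum_add) (rule good_summable[OF assms(1,3)], rule good_summable[OF assms(2,3)])

lemma Psi_cmult: "Psi (\<lambda>p. a * c p) z = a * Psi c z"
  unfolding Psi_def mult.assoc by (rule infsum_cmult_right')

lemma Psi_uminus: "Psi (\<lambda>p. - c p) z = - Psi c z"
  unfolding Psi_def by (simp add: infsum_uminus)

lemma Psi_diff: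
  assumes "good c r" "good d r" "norm z < r"
  shows "Psi (\<lambda>p. c p - d p) z = Psi c z - Psi d z"
  using Psi_add[of c r "\<lambda>p. - d p" z] good_uminus[of d r] Psi_uminus[of d z] assms by simp

lemma Psi_sum:
  assumes "finite I" "\<And>i. i \<in> I \<Longrightarrow> good (c i) r" "norm z < r"
  shows "Psi (\<lambda>p. \<Sum>i\<in>I. c i p) z = (\<Sum>i\<in>I. Psi (c i) z)"
  using assms(1,2)
proof (induction I rule: finite_induct)
  case empty
  then show ?case by (simp add: Psi_def)
next
  case (insert i I)
  have "Psi (\<lambda>p. \<Sum>i\<in>insert i I. c i p) z = Psi (\<lambda>p. c i p + (\<Sum>i\<in>I. c i p)) z"
    using insert by simp
  also have "\<dots> = Psi (c i) z + Psi (\<lambda>p. \<Sum>i\<in>I. c i p) z"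
    by (rule Psi_add[where r = r]) (use insert assms(3) in \<open>auto intro!: good_sum\<close>)
  finally show ?case using insert by simp
qed

lemma Psi_0: "Psi c 0 = (\<Sum>\<^sub>\<infinity>p. c p)"
  by (simp add: Psi_def)

lemma exp_taylor2: "\<bar>exp t - 1 - t\<bar> \<le> t\<^sup>2 * exp \<bar>t\<bar>" for t :: real
proof -
  obtain s where s: "\<bar>s\<bar> \<le> \<bar>t\<bar>" "exp t = (\<Sum>m<2. t ^ m / fact m) + exp s / fact 2 * t ^ 2"
    using Maclaurin_exp_le[of t 2] by blast
  have eq: "exp t - 1 - t = exp s / 2 * t\<^sup>2" using s(2) by (simp add: numeral_2_eq_2)
  have nn: "exp s / 2 * t\<^sup>2 \<ge> 0" by simp
  have "\<bar>exp t - 1 - t\<bar> = exp s / 2 * t\<^sup>2" by (simp only: eq abs_of_nonneg[OF nn])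
  also have "\<dots> \<le> exp \<bar>t\<bar> * t\<^sup>2"
  proof -
    have "exp s \<le> exp \<bar>t\<bar>" using s(1) by simp
    then have "exp s / 2 \<le> exp \<bar>t\<bar>" using exp_gt_zero[of s] by linarith
    then show ?thesis by (intro mult_right_mono) auto
  qed
  finally show ?thesis by (simp add: mult.commute)
qed

lemma infsum_diff':
  fixes f g :: "'a \<Rightarrow> real"
  assumes "f summable_on A" "g summable_on A"
  shows "infsum (\<lambda>x. f x - g x) A = infsum f A - infsum g A"
proof -
  have "infsum (\<lambda>x. f x + - g x) A = infsum f A + infsum (\<lambda>x. - g x) A"
    by (rule infsum_add) (use assms summable_on_uminus in auto)
  then show ?thesis by (simp add: infsum_uminus)
qed

lemma summable_on_diff':
  fixes f g :: "'a \<Rightarrow> real"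
  assumes "f summable_on A" "g summable_on A"
  shows "(\<lambda>x. f x - g x) summable_on A"
proof -
  have "(\<lambda>x. f x + - g x) summable_on A"
    by (rule summable_on_add) (use assms summable_on_uminus in auto)
  then show ?thesis by simp
qed

lemma good_normmult: "good c r \<Longrightarrow> good (\<lambda>p. c p * norm (bv p)) r"
  by (rule good_dom[where A = 0 and B = 1]) (auto simp: abs_mult)

lemma Psi_linear:
  assumes g: "good c r" and z: "norm z < r"
  shows "linear (\<lambda>h. Psi (\<lambda>p. c p * (bv p \<bullet> h)) z)"
proof (rule linearI)
  fix h1 h2 :: "(real^'a) \<times> real"
  have "Psi (\<lambda>p. c p * (bv p \<bullet> (h1 + h2))) z = Psi (\<lambda>p. c p * (bv p \<bullet> h1) + c p * (bv p \<bullet> h2)) z"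
    by (simp add: inner_add_right distrib_left)
  also have "\<dots> = Psi (\<lambda>p. c p * (bv p \<bullet> h1)) z + Psi (\<lambda>p. c p * (bv p \<bullet> h2)) z"
    by (rule Psi_add[OF good_mult[OF g] good_mult[OF g] z])
  finally show "Psi (\<lambda>p. c p * (bv p \<bullet> (h1 + h2))) z = Psi (\<lambda>p. c p * (bv p \<bullet> h1)) z + Psi (\<lambda>p. c p * (bv p \<bullet> h2)) z" .
next
  fix a :: real and h :: "(real^'a) \<times> real"
  have "Psi (\<lambda>p. c p * (bv p \<bullet> (a *\<^sub>R h))) z = Psi (\<lambda>p. a * (c p * (bv p \<bullet> h))) z"
    by (simp add: algebra_simps)
  also have "\<dots> = a *\<^sub>R Psi (\<lambda>p. c p * (bv p \<bullet> h)) z" by (simp add: Psi_cmult)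
  finally show "Psi (\<lambda>p. c p * (bv p \<bullet> (a *\<^sub>R h))) z = a *\<^sub>R Psi (\<lambda>p. c p * (bv p \<bullet> h)) z" .
qed

lemma Psi_deriv:
  fixes c :: "(int^'d::finite) \<times> nat \<Rightarrow> real"
  assumes g: "good c r" and z: "norm z < r"
  shows "(Psi c has_derivative (\<lambda>h. Psi (\<lambda>p. c p * (bv p \<bullet> h)) z)) (at z)"
  unfolding has_derivative_at_alt
proof (intro conjI allI impI)
  show "bounded_linear (\<lambda>h. Psi (\<lambda>p. c p * (bv p \<bullet> h)) z)"
    using Psi_linear[OF g z] by (simp add: linear_conv_bounded_linear)
next
  fix e :: real assume e: "e > 0"
  define \<rho> where "\<rho> = (norm z + r) / 2"
  define \<delta>0 where "\<delta>0 = \<rho> - norm z"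
  have nz: "0 \<le> norm z" by simp
  have a1: "0 \<le> norm z + r" using z nz by linarith
  have a2: "norm z + r < 2 * r" using z nz by linarith
  have a3: "2 * norm z < norm z + r" using z nz by linarith
  have \<rho>1: "0 \<le> \<rho>" unfolding \<rho>_def using a1 by simp
  have \<rho>2: "\<rho> < r" unfolding \<rho>_def using a2 by simp
  have \<rho>3: "\<delta>0 > 0" unfolding \<delta>0_def \<rho>_def using a3 by simp
  note \<rho> = \<rho>1 \<rho>2 \<rho>3
  define c2 where "c2 p = \<bar>c p\<bar> * (norm (bv p))\<^sup>2 * exp (norm (bv p) * \<rho>)" for p
  have gc2: "good (\<lambda>p. c p * norm (bv p) * norm (bv p)) r"
    by (rule good_normmult[OF good_normmult[OF g]])
  have sc2: "c2 summable_on UNIV"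
  proof -
    have "(\<lambda>p. \<bar>c p * norm (bv p) * norm (bv p)\<bar> * exp (norm (bv p) * \<rho>)) summable_on UNIV"
      using gc2 \<rho> unfolding good_def by blast
    moreover have "(\<lambda>p. \<bar>c p * norm (bv p) * norm (bv p)\<bar> * exp (norm (bv p) * \<rho>)) = c2"
      by (auto simp: c2_def abs_mult power2_eq_square)
    ultimately show ?thesis by simp
  qed
  define K where "K = infsum c2 UNIV"
  have K: "K \<ge> 0" unfolding K_def by (rule infsum_nonneg) (simp add: c2_def)
  define d where "d = min \<delta>0 (e / (K + 1))"
  have d: "d > 0" using \<rho> e K by (simp add: d_def)
  show "\<exists>d>0. \<forall>y. norm (y - z) < d \<longrightarrow>
        norm (Psi c y - Psi c z - Psi (\<lambda>p. c p * (bv p \<bullet> (y - z))) z) \<le> e * norm (y - z)"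
  proof (intro exI[of _ d] conjI allI impI d)
    fix y assume y: "norm (y - z) < d"
    define h where "h = y - z"
    have hd: "norm h < \<delta>0" "norm h < e / (K + 1)" using y by (auto simp: h_def d_def)
    have yz: "y = z + h" by (simp add: h_def)
    have ny: "norm y < r"
    proof -
      have "norm y \<le> norm z + norm h" unfolding yz by (rule norm_triangle_ineq)
      then show ?thesis using hd \<rho> by (simp add: \<delta>0_def)
    qed
    define u where "u p = c p * exp (bv p \<bullet> y)" for p
    define v where "v p = c p * exp (bv p \<bullet> z)" for p
    define w where "w p = c p * (bv p \<bullet> h) * exp (bv p \<bullet> z)" for p
    have su: "u summable_on UNIV" unfolding u_def by (rule good_summable[OF g ny])
    have sv: "v summable_on UNIV" unfolding v_def by (rule good_summable[OF g z])
    have sw: "w summable_on UNIV" unfolding w_def by (rule good_summable[OF good_mult[OF g] z])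
    have pt: "\<bar>u p - v p - w p\<bar> \<le> (norm h)\<^sup>2 * c2 p" for p
    proof -
      define t where "t = bv p \<bullet> h"
      have eu: "exp (bv p \<bullet> y) = exp (bv p \<bullet> z) * exp t"
        by (simp add: yz t_def inner_add_right exp_add)
      have "u p - v p - w p = c p * exp (bv p \<bullet> z) * (exp t - 1 - t)"
        by (simp add: u_def v_def w_def eu t_def algebra_simps)
      then have "\<bar>u p - v p - w p\<bar> = \<bar>c p\<bar> * exp (bv p \<bullet> z) * \<bar>exp t - 1 - t\<bar>"
        by (simp add: abs_mult)
      also have "\<dots> \<le> \<bar>c p\<bar> * exp (bv p \<bullet> z) * (t\<^sup>2 * exp \<bar>t\<bar>)"
        by (intro mult_left_mono exp_taylor2) auto
      also have "\<dots> \<le> \<bar>c p\<bar> * ((norm (bv p))\<^sup>2 * (norm h)\<^sup>2 * exp (norm (bv p) * \<rho>))"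
      proof -
        have tb: "\<bar>t\<bar> \<le> norm (bv p) * norm h" unfolding t_def by (rule Cauchy_Schwarz_ineq2)
        have t2: "t\<^sup>2 \<le> (norm (bv p))\<^sup>2 * (norm h)\<^sup>2"
        proof -
          have "\<bar>t\<bar>\<^sup>2 \<le> (norm (bv p) * norm h)\<^sup>2" by (rule power_mono[OF tb]) simp
          then show ?thesis by (simp add: power_mult_distrib)
        qed
        have zb: "bv p \<bullet> z \<le> norm (bv p) * norm z" by (rule norm_cauchy_schwarz)
        have "bv p \<bullet> z + \<bar>t\<bar> \<le> norm (bv p) * norm z + norm (bv p) * norm h"
          using zb tb by simp
        also have "\<dots> = norm (bv p) * (norm z + norm h)" by (simp add: algebra_simps)
        also have "\<dots> \<le> norm (bv p) * \<rho>"
          by (rule mult_left_mono) (use hd \<rho> in \<open>auto simp: \<delta>0_def\<close>)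
        finally have X: "exp (bv p \<bullet> z) * exp \<bar>t\<bar> \<le> exp (norm (bv p) * \<rho>)"
          by (simp flip: exp_add)
        have "exp (bv p \<bullet> z) * (t\<^sup>2 * exp \<bar>t\<bar>) \<le> t\<^sup>2 * exp (norm (bv p) * \<rho>)"
          using mult_left_mono[OF X, of "t\<^sup>2"] by (simp add: algebra_simps)
        also have "\<dots> \<le> (norm (bv p))\<^sup>2 * (norm h)\<^sup>2 * exp (norm (bv p) * \<rho>)"
          by (rule mult_right_mono[OF t2]) simp
        finally have "exp (bv p \<bullet> z) * (t\<^sup>2 * exp \<bar>t\<bar>) \<le> (norm (bv p))\<^sup>2 * (norm h)\<^sup>2 * exp (norm (bv p) * \<rho>)" .
        then show ?thesis by (simp add: mult.assoc mult_left_mono)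
      qed
      also have "\<dots> = (norm h)\<^sup>2 * c2 p" by (simp add: c2_def algebra_simps)
      finally show ?thesis .
    qed
    have sb: "(\<lambda>p. (norm h)\<^sup>2 * c2 p) summable_on UNIV"
      by (rule summable_on_cmult_right[OF sc2])
    have sabs: "(\<lambda>p. norm (u p - v p - w p)) summable_on UNIV"
      by (rule summable_on_comparison_test[OF sb]) (use pt in auto)
    have "Psi c y - Psi c z - Psi (\<lambda>p. c p * (bv p \<bullet> (y - z))) z = infsum u UNIV - infsum v UNIV - infsum w UNIV"
      unfolding Psi_def u_def[abs_def] v_def[abs_def] w_def[abs_def] h_def by simp
    also have "\<dots> = infsum (\<lambda>p. u p - v p - w p) UNIV"
      using su sv sw by (simp add: infsum_diff' summable_on_diff')
    finally have eq: "Psi c y - Psi c z - Psi (\<lambda>p. c p * (bv p \<bullet> (y - z))) z = infsum (\<lambda>p. u p - v p - w p) UNIV" .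
    have "norm (infsum (\<lambda>p. u p - v p - w p) UNIV) \<le> infsum (\<lambda>p. norm (u p - v p - w p)) UNIV"
      by (rule norm_infsum_bound) (use sabs in simp)
    also have "\<dots> \<le> infsum (\<lambda>p. (norm h)\<^sup>2 * c2 p) UNIV"
      by (rule infsum_mono) (use sabs sb pt in auto)
    also have "\<dots> = (norm h)\<^sup>2 * K" by (simp add: K_def infsum_cmult_right')
    also have "\<dots> \<le> e * norm h"
    proof -
      have "norm h * K \<le> e"
      proof -
        have "norm h * K \<le> (e / (K + 1)) * K" using hd K by (intro mult_right_mono) auto
        also have "\<dots> \<le> e" using K e by (simp add: field_simps)
        finally show ?thesis .
      qed
      then have "norm h * (norm h * K) \<le> norm h * e" by (intro mult_left_mono) auto
      then show ?thesis by (simp add: power2_eq_square algebra_simps)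
    qed
    finally show "norm (Psi c y - Psi c z - Psi (\<lambda>p. c p * (bv p \<bullet> (y - z))) z) \<le> e * norm (y - z)"
      using eq by (simp add: h_def)
  qed
qed

lemma ift:
  fixes Phi :: "('a::euclidean_space) \<times> real \<Rightarrow> real" and lam :: "'a \<Rightarrow> real"
  assumes Dd: "(Phi has_derivative D) (at (x0, lam x0))"
    and B: "D (0, 1) \<noteq> 0"
    and cont: "continuous (at x0) lam"
    and S: "open S" "x0 \<in> S" "\<And>x. x \<in> S \<Longrightarrow> Phi (x, lam x) = Phi (x0, lam x0)"
  shows "(lam has_derivative (\<lambda>h. - D (h, 0) / D (0, 1))) (at x0)"
proof -
  define l0 where "l0 = lam x0"
  define Bv where "Bv = D (0, 1)"
  define \<beta> where "\<beta> = \<bar>Bv\<bar>"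
  have \<beta>: "\<beta> > 0" using B by (simp add: \<beta>_def Bv_def)
  have bl: "bounded_linear D" using Dd by (rule has_derivative_bounded_linear)
  have Dsplit: "D (h, k) = D (h, 0) + k * Bv" for h k
  proof -
    have linD: "linear D" by (rule bounded_linear.linear[OF bl])
    have e1: "D ((h, 0) + k *\<^sub>R (0, 1)) = D (h, 0) + D (k *\<^sub>R (0, 1))" by (rule linear_add[OF linD])
    have e2: "D (k *\<^sub>R (0, 1)) = k *\<^sub>R D (0, 1)" by (rule linear_scale[OF linD])
    show ?thesis using e1 e2 by (simp add: Bv_def)
  qed
  obtain M where M: "M > 0" "\<And>v. norm (D v) \<le> norm v * M"
    using bounded_linear.pos_bounded[OF bl] by blast
  have DM: "\<bar>D (h, 0)\<bar> \<le> M * norm h" for h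
    using M(2)[of "(h, 0)"] by (simp add: mult.commute)
  have lin: "linear (\<lambda>h. - D (h, 0) / D (0, 1))"
  proof (rule linearI)
    fix a b :: 'a
    have "D (a + b, 0) = D ((a, 0) + (b, 0))" by simp
    also have "\<dots> = D (a, 0) + D (b, 0)" by (rule linear_add[OF bounded_linear.linear[OF bl]])
    finally show "- D (a + b, 0) / D (0, 1) = - D (a, 0) / D (0, 1) + - D (b, 0) / D (0, 1)"
      by (simp add: add_divide_distrib diff_divide_distrib)
  next
    fix r :: real and a :: 'a
    have "D (r *\<^sub>R a, 0) = D (r *\<^sub>R (a, 0))" by simp
    also have "\<dots> = r *\<^sub>R D (a, 0)" by (rule linear_scale[OF bounded_linear.linear[OF bl]])
    finally show "- D (r *\<^sub>R a, 0) / D (0, 1) = r *\<^sub>R (- D (a, 0) / D (0, 1))"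
      by simp
  qed
  show ?thesis
    unfolding has_derivative_at_alt
  proof (intro conjI allI impI)
    show "bounded_linear (\<lambda>h. - D (h, 0) / D (0, 1))"
      using lin by (simp add: linear_conv_bounded_linear)
  next
    fix e :: real assume e: "e > 0"
    define K where "K = (2 * M + \<beta>) / \<beta>"
    have K: "K \<ge> 0" using M \<beta> by (simp add: K_def)
    define \<epsilon> where "\<epsilon> = min (\<beta> / 2) (e * \<beta> / (1 + K))"
    have \<epsilon>1: "\<epsilon> > 0" using \<beta> e K by (auto simp: \<epsilon>_def)
    have \<epsilon>2: "\<epsilon> \<le> \<beta> / 2" unfolding \<epsilon>_def by (rule min.cobounded1)
    have \<epsilon>3: "\<epsilon> \<le> e * \<beta> / (1 + K)" unfolding \<epsilon>_def by (rule min.cobounded2)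
    note \<epsilon> = \<epsilon>1 \<epsilon>2 \<epsilon>3
    obtain d1 where d1: "d1 > 0" "\<And>y. norm (y - (x0, l0)) < d1 \<Longrightarrow>
        norm (Phi y - Phi (x0, l0) - D (y - (x0, l0))) \<le> \<epsilon> * norm (y - (x0, l0))"
      using Dd \<epsilon>(1) unfolding has_derivative_at_alt l0_def by blast
    obtain d2 where d2: "d2 > 0" "\<And>x. dist x x0 < d2 \<Longrightarrow> dist (lam x) (lam x0) < d1 / 2"
      using cont d1(1) unfolding continuous_at_eps_delta by (meson half_gt_zero)
    obtain d3 where d3: "d3 > 0" "ball x0 d3 \<subseteq> S"
      using S(1,2) open_contains_ball by blast
    define d where "d = min (d1 / 2) (min d2 d3)"
    have d: "d > 0" using d1 d2 d3 by (simp add: d_def)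
    show "\<exists>d>0. \<forall>y. norm (y - x0) < d \<longrightarrow>
        norm (lam y - lam x0 - - D (y - x0, 0) / D (0, 1)) \<le> e * norm (y - x0)"
    proof (intro exI[of _ d] conjI allI impI d)
      fix x assume x: "norm (x - x0) < d"
      define h where "h = x - x0"
      define \<Delta> where "\<Delta> = lam x - l0"
      have hd: "norm h < d1 / 2" "norm h < d2" "norm h < d3" using x by (auto simp: h_def d_def)
      have \<Delta>d: "\<bar>\<Delta>\<bar> < d1 / 2"
        using d2(2)[of x] hd by (simp add: \<Delta>_def l0_def h_def dist_norm)
      have xS: "x \<in> S" using d3(2) hd by (auto simp: h_def dist_norm norm_minus_commute)
      have yx: "(x, lam x) - (x0, l0) = (h, \<Delta>)" by (simp add: h_def \<Delta>_def)
      have nhD: "norm (h, \<Delta>) \<le> norm h + \<bar>\<Delta>\<bar>" using norm_Pair_le[of h \<Delta>] by simp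
      have "norm ((x, lam x) - (x0, l0)) < d1" using yx nhD hd \<Delta>d by simp
      then have "\<bar>Phi (x, lam x) - Phi (x0, l0) - D (h, \<Delta>)\<bar> \<le> \<epsilon> * norm (h, \<Delta>)"
        using d1(2)[of "(x, lam x)"] yx by simp
      then have "\<bar>D (h, \<Delta>)\<bar> \<le> \<epsilon> * norm (h, \<Delta>)"
        using S(3)[OF xS] by (simp add: l0_def)
      also have "\<dots> \<le> \<epsilon> * (norm h + \<bar>\<Delta>\<bar>)" by (rule mult_left_mono[OF nhD]) (use \<epsilon>(1) in simp)
      finally have main: "\<bar>D (h, 0) + \<Delta> * Bv\<bar> \<le> \<epsilon> * (norm h + \<bar>\<Delta>\<bar>)" by (simp add: Dsplit[of h \<Delta>])
      have \<Delta>K: "\<bar>\<Delta>\<bar> \<le> K * norm h"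
      proof -
        have s1: "\<beta> * \<bar>\<Delta>\<bar> = \<bar>\<Delta> * Bv\<bar>" by (simp add: \<beta>_def abs_mult)
        have s2: "\<bar>\<Delta> * Bv\<bar> \<le> \<bar>D (h, 0)\<bar> + \<epsilon> * (norm h + \<bar>\<Delta>\<bar>)" using main by (smt (verit))
        have s3: "\<epsilon> * (norm h + \<bar>\<Delta>\<bar>) = \<epsilon> * norm h + \<epsilon> * \<bar>\<Delta>\<bar>" by (simp add: distrib_left)
        have s4: "\<epsilon> * norm h \<le> (\<beta> / 2) * norm h" using \<epsilon>(2) by (intro mult_right_mono) auto
        have s5: "\<epsilon> * \<bar>\<Delta>\<bar> \<le> (\<beta> / 2) * \<bar>\<Delta>\<bar>" using \<epsilon>(2) by (intro mult_right_mono) auto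
        have s6: "\<beta> * \<bar>\<Delta>\<bar> = (\<beta> / 2) * \<bar>\<Delta>\<bar> + (\<beta> / 2) * \<bar>\<Delta>\<bar>" by simp
        have s7: "(M + \<beta> / 2) * norm h = M * norm h + (\<beta> / 2) * norm h" by (simp add: distrib_right)
        have "(\<beta> / 2) * \<bar>\<Delta>\<bar> \<le> (M + \<beta> / 2) * norm h"
          using s1 s2 s3 s4 s5 s6 s7 DM[of h] by linarith
        then have "\<bar>\<Delta>\<bar> \<le> (M + \<beta> / 2) * norm h / (\<beta> / 2)"
          using \<beta> by (subst pos_le_divide_eq) (auto simp: mult.commute)
        also have "\<dots> = K * norm h" using \<beta> by (simp add: K_def field_simps)
        finally show ?thesis .
      qed
      have "lam x - lam x0 - - D (x - x0, 0) / D (0, 1) = (D (h, 0) + \<Delta> * Bv) / Bv"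
        using B by (simp add: h_def \<Delta>_def l0_def Bv_def field_simps)
      then have "norm (lam x - lam x0 - - D (x - x0, 0) / D (0, 1)) = \<bar>D (h, 0) + \<Delta> * Bv\<bar> / \<beta>"
        by (simp add: \<beta>_def)
      also have "\<dots> \<le> \<epsilon> * (norm h + \<bar>\<Delta>\<bar>) / \<beta>" using main \<beta> by (simp add: divide_right_mono)
      also have "\<dots> \<le> \<epsilon> * ((1 + K) * norm h) / \<beta>"
        using \<Delta>K \<epsilon>(1) \<beta> by (intro divide_right_mono mult_left_mono) (auto simp: algebra_simps)
      also have "\<dots> \<le> (e * \<beta> / (1 + K)) * ((1 + K) * norm h) / \<beta>"
        using \<epsilon>(3) \<beta> K by (intro divide_right_mono mult_right_mono) auto
      also have "\<dots> = e * norm h"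
      proof -
        have "\<beta> + K * \<beta> > 0" using \<beta> K by (simp add: add_pos_nonneg)
        then have "\<beta> + K * \<beta> \<noteq> 0" by simp
        then show ?thesis using \<beta> K by (simp add: field_simps)
      qed
      finally show "norm (lam x - lam x0 - - D (x - x0, 0) / D (0, 1)) \<le> e * norm (x - x0)"
        by (simp add: h_def)
    qed
  qed
qed

lemma has_derivative_vec_lambda':
  fixes F :: "'i::finite \<Rightarrow> 'a::real_normed_vector \<Rightarrow> real"
  assumes "\<And>i. (F i has_derivative F' i) (at a)"
  shows "((\<lambda>x. \<chi> i. F i x) has_derivative (\<lambda>h. \<chi> i. F' i h)) (at a)"
proof -
  have *: "((\<lambda>x. (\<chi> i. F i x) \<bullet> b) has_derivative (\<lambda>h. (\<chi> i. F' i h) \<bullet> b)) (at a)" if "b \<in> Basis" for b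
  proof -
    from that obtain j where b: "b = axis j 1" unfolding Basis_vec_def by auto
    have e1: "(\<lambda>x. (\<chi> i. F i x) \<bullet> b) = F j" by (rule ext) (simp add: b inner_axis)
    have e2: "(\<lambda>h. (\<chi> i. F' i h) \<bullet> b) = F' j" by (rule ext) (simp add: b inner_axis)
    show ?thesis unfolding e1 e2 by (rule assms)
  qed
  show ?thesis
    by (rule has_derivative_componentwise_within[THEN iffD2]) (use * in blast)
qed

lemma Psi_ge_term:
  assumes g: "good c r" and z: "norm z < r" and nn: "\<And>p. c p \<ge> 0"
  shows "c q * exp (bv q \<bullet> z) \<le> Psi c z"
proof -
  have "sum (\<lambda>p. c p * exp (bv p \<bullet> z)) {q} \<le> infsum (\<lambda>p. c p * exp (bv p \<bullet> z)) UNIV"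
    by (rule finite_sum_le_infsum[OF good_summable[OF g z]]) (use nn in auto)
  then show ?thesis by (simp add: Psi_def)
qed

lemma Psi_axis_sum:
  fixes c g :: "(int^'d::finite) \<times> nat \<Rightarrow> real" and v :: "real^'d"
  assumes g: "good (\<lambda>p. c p * g p) r" and z: "norm z < r"
  shows "(\<Sum>i\<in>UNIV. v $ i * Psi (\<lambda>p. c p * (bv p \<bullet> (axis i 1, 0)) * g p) z)
       = Psi (\<lambda>p. c p * (bv p \<bullet> (v, 0)) * g p) z"
proof -
  have gi: "good (\<lambda>p. v $ i * (c p * (bv p \<bullet> (axis i 1, 0)) * g p)) r" for i
  proof -
    have "good (\<lambda>p. v $ i * (c p * g p * (bv p \<bullet> (axis i 1, 0)))) r"
      by (rule good_cmult[OF good_mult[OF g]])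
    moreover have "(\<lambda>p. v $ i * (c p * g p * (bv p \<bullet> (axis i 1, 0)))) = (\<lambda>p. v $ i * (c p * (bv p \<bullet> (axis i 1, 0)) * g p))"
      by (rule ext) (simp only: mult_ac)
    ultimately show ?thesis by simp
  qed
  have "(\<Sum>i\<in>UNIV. v $ i * Psi (\<lambda>p. c p * (bv p \<bullet> (axis i 1, 0)) * g p) z)
      = (\<Sum>i\<in>UNIV. Psi (\<lambda>p. v $ i * (c p * (bv p \<bullet> (axis i 1, 0)) * g p)) z)"
    by (simp add: Psi_cmult)
  also have "\<dots> = Psi (\<lambda>p. \<Sum>i\<in>UNIV. v $ i * (c p * (bv p \<bullet> (axis i 1, 0)) * g p)) z"
    by (rule Psi_sum[symmetric]) (use gi z in auto)
  also have "(\<lambda>p. \<Sum>i\<in>UNIV. v $ i * (c p * (bv p \<bullet> (axis i 1, 0)) * g p)) = (\<lambda>p. c p * (bv p \<bullet> (v, 0)) * g p)"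
  proof
    fix p :: "(int^'d) \<times> nat"
    have ax: "bv p \<bullet> (axis i 1, 0) = zvec (fst p) $ i" for i by (simp add: bv_def inner_axis)
    have "(\<Sum>i\<in>UNIV. v $ i * (c p * (bv p \<bullet> (axis i 1, 0)) * g p)) = (\<Sum>i\<in>UNIV. (c p * g p) * (zvec (fst p) $ i * v $ i))"
      by (rule sum.cong) (simp_all only: ax mult_ac)
    also have "\<dots> = c p * g p * (\<Sum>i\<in>UNIV. zvec (fst p) $ i * v $ i)"
      by (rule sum_distrib_left[symmetric])
    also have "(\<Sum>i\<in>UNIV. zvec (fst p) $ i * v $ i) = bv p \<bullet> (v, 0)" by (simp add: bv_def inner_vec_def)
    finally show "(\<Sum>i\<in>UNIV. v $ i * (c p * (bv p \<bullet> (axis i 1, 0)) * g p)) = c p * (bv p \<bullet> (v, 0)) * g p"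
      by (simp only: mult_ac)
  qed
  finally show ?thesis .
qed

theorem lemma4:
  fixes f :: "int ^ 'd::finite \<Rightarrow> nat \<Rightarrow> real"
    and lam :: "real ^ 'd \<Rightarrow> real"
    and C \<nu> :: real
    and U :: "(real ^ 'd) set"
  assumes nonneg: "\<And>x n. f x n \<ge> 0"
    and no_zero_time: "\<And>x. f x 0 = 0"
    and prob: "((\<lambda>p. f (fst p) (snd p)) has_sum 1) UNIV"
    and nondegenerate: "\<And>(a :: real ^ 'd) (b :: real) (c :: real).
          (a, b) \<noteq> 0 \<Longrightarrow> \<exists>x n. f x n > 0 \<and> a \<bullet> zvec x + b * real n \<noteq> c"
    and aperiodic: "gen_subgroup (support f) = UNIV"
    and tail: "\<nu> > 0" "\<And>x n. f x n \<le> C * exp (- \<nu> * (norm (zvec x) + real n))"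
    and U: "open U" "0 \<in> U"
    and lam_cont: "continuous_on U lam"
    and lam0: "lam 0 = 0"
    and lam_eq: "\<And>\<xi>. \<xi> \<in> U \<Longrightarrow> logF f \<xi> (lam \<xi>) = 0"
  shows "\<exists>H. hessian_at lam 0 H \<and> pos_def H"
proof -
  define w where "w p = f (fst p) (snd p)" for p :: "(int^'d) \<times> nat"
  have wnn: "w p \<ge> 0" for p using nonneg by (simp add: w_def)
  obtain x1 n1 where p1: "f x1 n1 > 0"
  proof -
    have "((0::real^'d), (1::real)) \<noteq> 0" by (simp add: zero_prod_def)
    from nondegenerate[OF this, of 0] show ?thesis using that by blast
  qed
  define p0 where "p0 = (x1, n1)"
  have wp0: "w p0 > 0" using p1 by (simp add: w_def p0_def)
  have n1: "n1 \<noteq> 0" using p1 no_zero_time by (cases n1) auto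
  have Cpos: "C > 0"
  proof -
    have "0 < C * exp (- \<nu> * (norm (zvec x1) + real n1))" using p1 tail(2)[of x1 n1] by linarith
    then show ?thesis by (simp add: zero_less_mult_iff)
  qed
  have good_w: "good w \<nu>"
    unfolding good_def
  proof (intro allI impI)
    fix \<rho> :: real assume \<rho>: "0 \<le> \<rho>" "\<rho> < \<nu>"
    have s: "(\<lambda>p::(int^'d) \<times> nat. C * exp (- (\<nu> - \<rho>) * (norm (zvec (fst p)) + real (snd p)))) summable_on UNIV"
      by (rule summable_on_cmult_right[OF lattice_summable]) (use \<rho> in simp)
    show "(\<lambda>p. \<bar>w p\<bar> * exp (norm (bv p) * \<rho>)) summable_on UNIV"
    proof (rule summable_on_comparison_test[OF s])
      fix p :: "(int^'d) \<times> nat"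
      define sp where "sp = norm (zvec (fst p)) + real (snd p)"
      have b: "norm (bv p) \<le> sp" using norm_bv_le by (simp add: sp_def)
      have t: "w p \<le> C * exp (- \<nu> * sp)" using tail(2) by (simp add: w_def sp_def)
      have e: "exp (norm (bv p) * \<rho>) \<le> exp (sp * \<rho>)"
        using mult_right_mono[OF b \<rho>(1)] by simp
      have "\<bar>w p\<bar> * exp (norm (bv p) * \<rho>) \<le> C * exp (- \<nu> * sp) * exp (sp * \<rho>)"
        by (rule mult_mono) (use wnn t e Cpos in auto)
      also have "\<dots> = C * exp (- (\<nu> - \<rho>) * sp)"
        by (simp add: mult.assoc flip: exp_add) (simp add: algebra_simps)
      finally show "\<bar>w p\<bar> * exp (norm (bv p) * \<rho>) \<le> C * exp (- (\<nu> - \<rho>) * (norm (zvec (fst p)) + real (snd p)))"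
        by (simp add: sp_def)
    qed auto
  qed
  have logF_eq: "logF f \<xi> l = ln (Psi w (\<xi>, l))" for \<xi> l
    unfolding logF_def Psi_def
    by (rule arg_cong[where f = ln], rule infsum_cong) (simp add: w_def bv_def algebra_simps)
  define wn where "wn p = w p * real (snd p)" for p :: "(int^'d) \<times> nat"
  have good_wn: "good wn \<nu>"
  proof (rule good_dom[OF good_w, where A = 0 and B = 1])
    fix p :: "(int^'d) \<times> nat"
    have "real (snd p) \<le> norm (bv p)"
      using norm_snd_le[of "- real (snd p)" "zvec (fst p)"] by (simp add: bv_def)
    then show "\<bar>wn p\<bar> \<le> \<bar>w p\<bar> * (0 + 1 * norm (bv p))"
      using wnn[of p] by (simp add: wn_def abs_mult mult_left_mono)
  qed auto
  have Ppos: "Psi w z > 0" if "norm z < \<nu>" for z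
    using Psi_ge_term[OF good_w that wnn, of p0] wp0 by (smt (verit) exp_gt_zero mult_pos_pos)
  have Pnpos: "Psi wn z > 0" if "norm z < \<nu>" for z
  proof -
    have "wn p0 > 0" using wp0 n1 by (simp add: wn_def p0_def)
    moreover have "wn p0 * exp (bv p0 \<bullet> z) \<le> Psi wn z"
      by (rule Psi_ge_term[OF good_wn that]) (simp add: wn_def wnn)
    ultimately show ?thesis by (smt (verit) exp_gt_zero mult_pos_pos)
  qed
  define V where "V = U \<inter> (\<lambda>\<xi>. (\<xi>, lam \<xi>)) -` ball 0 \<nu>"
  have contP: "continuous_on U (\<lambda>\<xi>. (\<xi>, lam \<xi>))"
    by (intro continuous_on_Pair continuous_on_id lam_cont)
  have Vopen: "open V"
  proof -
    have "open ((\<lambda>\<xi>. (\<xi>, lam \<xi>)) -` ball 0 \<nu> \<inter> U)"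
      using continuous_on_open_vimage[OF U(1)] contP open_ball by blast
    then show ?thesis by (simp add: V_def Int_commute)
  qed
  have nz0: "norm ((0::real^'d), lam 0) < \<nu>" using tail(1) by (simp add: lam0)
  have V0: "0 \<in> V" using U(2) nz0 by (simp add: V_def)
  have Vn: "norm (\<xi>, lam \<xi>) < \<nu>" if "\<xi> \<in> V" for \<xi> using that by (simp add: V_def)
  have VU: "\<xi> \<in> U" if "\<xi> \<in> V" for \<xi> using that by (simp add: V_def)
  have Phi1: "Psi w (\<xi>, lam \<xi>) = 1" if "\<xi> \<in> V" for \<xi>
    using lam_eq[OF VU[OF that]] Ppos[OF Vn[OF that]] by (simp add: logF_eq)
  have lamcont: "continuous (at \<xi>) lam" if "\<xi> \<in> U" for \<xi>
    using lam_cont U(1) that continuous_on_eq_continuous_at by blast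
  define Dz where "Dz z u = Psi (\<lambda>p. w p * (bv p \<bullet> u)) z" for z u :: "(real^'d) \<times> real"
  have PhiD: "(Psi w has_derivative Dz z) (at z)" if "norm z < \<nu>" for z
    using Psi_deriv[OF good_w that] by (simp add: Dz_def[abs_def])
  have c0eq: "(\<lambda>p. w p * (bv p \<bullet> ((0::real^'d), (1::real)))) = (\<lambda>p. - wn p)"
    by (rule ext) (simp add: bv_def wn_def)
  have Dz01: "Dz z (0, 1) = - Psi wn z" for z by (simp add: Dz_def c0eq Psi_uminus)
  have Dz01ne: "Dz z (0, 1) \<noteq> 0" if "norm z < \<nu>" for z using Pnpos[OF that] Dz01[of z] by simp
  have lamD: "(lam has_derivative (\<lambda>h. - Dz (\<xi>, lam \<xi>) (h, 0) / Dz (\<xi>, lam \<xi>) (0, 1))) (at \<xi>)"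
    if xi: "\<xi> \<in> V" for \<xi>
  proof (rule ift[where D = "Dz (\<xi>, lam \<xi>)" and Phi = "Psi w" and S = V])
    show "(Psi w has_derivative Dz (\<xi>, lam \<xi>)) (at (\<xi>, lam \<xi>))" by (rule PhiD[OF Vn[OF xi]])
    show "Dz (\<xi>, lam \<xi>) (0, 1) \<noteq> 0" by (rule Dz01ne[OF Vn[OF xi]])
    show "continuous (at \<xi>) lam" by (rule lamcont[OF VU[OF xi]])
    show "open V" by (rule Vopen)
    show "\<xi> \<in> V" by (rule xi)
    show "Psi w (x, lam x) = Psi w (\<xi>, lam \<xi>)" if "x \<in> V" for x using Phi1[OF that] Phi1[OF xi] by simp
  qed
  have lamdiff: "\<forall>\<xi>\<in>V. lam differentiable (at \<xi>)" using lamD differentiable_def by blast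
  define G where "G \<xi> = (\<chi> i. - (Dz (\<xi>, lam \<xi>) (axis i 1, 0) / Dz (\<xi>, lam \<xi>) (0, 1)))" for \<xi>
  have Geq: "G \<xi> = (\<chi> i. frechet_derivative lam (at \<xi>) (axis i 1))" if "\<xi> \<in> V" for \<xi>
    by (simp add: G_def frechet_derivative_at[OF lamD[OF that], symmetric])
  define L0 where "L0 h = - Dz (0, lam 0) (h, 0) / Dz (0, lam 0) (0, 1)" for h
  have lamD0: "(lam has_derivative L0) (at 0)"
    unfolding L0_def[abs_def] by (rule lamD[OF V0])
  have PD: "((\<lambda>\<xi>. (\<xi>, lam \<xi>)) has_derivative (\<lambda>h. (h, L0 h))) (at 0)"
    by (rule has_derivative_Pair[OF has_derivative_ident lamD0])
  have compD: "((\<lambda>\<xi>. Dz (\<xi>, lam \<xi>) u) has_derivative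
      (\<lambda>h. Psi (\<lambda>p. w p * (bv p \<bullet> u) * (bv p \<bullet> (h, L0 h))) (0, lam 0))) (at 0)" for u
  proof -
    have "(Psi (\<lambda>p. w p * (bv p \<bullet> u)) has_derivative
        (\<lambda>k. Psi (\<lambda>p. w p * (bv p \<bullet> u) * (bv p \<bullet> k)) (0, lam 0))) (at (0, lam 0))"
      by (rule Psi_deriv[OF good_mult[OF good_w] nz0])
    from has_derivative_compose[OF PD this] show ?thesis by (simp add: Dz_def)
  qed
  define B0 where "B0 = Dz (0, lam 0) (0, 1)"
  have B0ne: "B0 \<noteq> 0" using Dz01ne[OF nz0] by (simp add: B0_def)
  define a where "a i = Dz (0, lam 0) (axis i 1, 0)" for i
  define dN where "dN i h = Psi (\<lambda>p. w p * (bv p \<bullet> (axis i 1, 0)) * (bv p \<bullet> (h, L0 h))) (0, lam 0)" for i h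
  define dB where "dB h = Psi (\<lambda>p. w p * (bv p \<bullet> ((0::real^'d), (1::real))) * (bv p \<bullet> (h, L0 h))) (0, lam 0)" for h
  define DG where "DG h = (\<chi> i. - (- a i * (inverse B0 * dB h * inverse B0) + dN i h / B0))" for h
  have compG: "((\<lambda>\<xi>. - (Dz (\<xi>, lam \<xi>) (axis i 1, 0) / Dz (\<xi>, lam \<xi>) (0, 1))) has_derivative
      (\<lambda>h. - (- a i * (inverse B0 * dB h * inverse B0) + dN i h / B0))) (at 0)" for i
  proof -
    note div = has_derivative_divide[OF compD[of "(axis i 1, 0)"] compD[of "((0::real^'d), (1::real))"]]
    have ne: "Dz (0, lam 0) (0, 1) \<noteq> 0" by (rule Dz01ne[OF nz0])
    show ?thesis unfolding a_def dN_def dB_def B0_def by (rule has_derivative_minus[OF div[OF ne]])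
  qed
  have GD: "(G has_derivative DG) (at 0)"
    unfolding G_def[abs_def] DG_def[abs_def] by (rule has_derivative_vec_lambda') (rule compG)
  have gradD: "((\<lambda>\<xi>. \<chi> i. frechet_derivative lam (at \<xi>) (axis i 1)) has_derivative DG) (at 0)"
    by (rule has_derivative_transform_within_open[OF GD Vopen V0]) (rule Geq)
  have blDG: "bounded_linear DG" using GD by (rule has_derivative_bounded_linear)
  define H where "H = matrix DG"
  have HDG: "(\<lambda>h. H *v h) = DG" unfolding H_def using blDG by simp
  have hess: "hessian_at lam 0 H"
    unfolding hessian_at_def HDG using Vopen V0 lamdiff gradD by blast
  have pd: "pos_def H"
    unfolding pos_def_def
  proof (intro allI impI)
    fix v :: "real^'d" assume v: "v \<noteq> 0"
    have Hv: "H *v v = DG v" using HDG by metis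
    define \<mu> where "\<mu> = L0 v"
    define \<tau> where "\<tau> = Psi wn (0, lam 0)"
    have \<tau>: "\<tau> > 0" using Pnpos[OF nz0] by (simp add: \<tau>_def)
    have B0\<tau>: "B0 = - \<tau>" using Dz01 by (simp add: B0_def \<tau>_def)
    define ax where "ax = Dz (0, lam 0) (v, 0)"
    have \<mu>eq: "\<mu> = ax / \<tau>"
      using B0\<tau> by (simp add: \<mu>_def L0_def ax_def B0_def)
    define Y where "Y p = bv p \<bullet> (v, \<mu>)" for p
    define S1 where "S1 = Psi (\<lambda>p. w p * (bv p \<bullet> (v, 0)) * Y p) (0, lam 0)"
    define S2 where "S2 = Psi (\<lambda>p. wn p * Y p) (0, lam 0)"
    have goodY: "good (\<lambda>p. w p * Y p) \<nu>" unfolding Y_def by (rule good_mult[OF good_w])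
    have sum_a: "(\<Sum>i\<in>UNIV. v $ i * a i) = ax"
      using Psi_axis_sum[of w "\<lambda>_. 1" \<nu> "(0, lam 0)" v] good_w nz0 by (simp add: a_def ax_def Dz_def)
    have sum_dN: "(\<Sum>i\<in>UNIV. v $ i * dN i v) = S1"
      using Psi_axis_sum[OF goodY nz0, of v] by (simp add: dN_def S1_def Y_def \<mu>_def)
    have dBeq: "dB v = - S2"
    proof -
      have "(\<lambda>p. w p * (bv p \<bullet> ((0::real^'d), (1::real))) * (bv p \<bullet> (v, L0 v))) = (\<lambda>p. - (wn p * Y p))"
        by (rule ext) (simp add: bv_def wn_def Y_def \<mu>_def)
      then show ?thesis by (simp add: dB_def S2_def Psi_uminus)
    qed
    have comp: "DG v $ i = a i * (dB v / \<tau>\<^sup>2) + dN i v * (1 / \<tau>)" for i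
      using \<tau> by (simp add: DG_def B0\<tau> field_simps power2_eq_square)
    have "v \<bullet> DG v = (\<Sum>i\<in>UNIV. v $ i * (a i * (dB v / \<tau>\<^sup>2) + dN i v * (1 / \<tau>)))"
      by (simp add: inner_vec_def comp)
    also have "\<dots> = (\<Sum>i\<in>UNIV. v $ i * a i) * (dB v / \<tau>\<^sup>2) + (\<Sum>i\<in>UNIV. v $ i * dN i v) * (1 / \<tau>)"
      by (simp add: distrib_left sum.distrib sum_distrib_right mult.assoc sum_divide_distrib)
    also have "\<dots> = ax * (- S2) / \<tau>\<^sup>2 + S1 / \<tau>" by (simp add: sum_a sum_dN dBeq)
    also have "\<dots> = (S1 - \<mu> * S2) / \<tau>" using \<tau> by (simp add: \<mu>eq field_simps power2_eq_square)
    finally have DGv: "v \<bullet> DG v = (S1 - \<mu> * S2) / \<tau>" .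
    have g1: "good (\<lambda>p. w p * (bv p \<bullet> (v, 0)) * Y p) \<nu>"
      unfolding Y_def by (rule good_mult[OF good_mult[OF good_w]])
    have g2: "good (\<lambda>p. wn p * Y p) \<nu>"
      unfolding Y_def by (rule good_mult[OF good_wn])
    have Qeq: "Psi (\<lambda>p. w p * Y p * Y p) (0, lam 0) = S1 - \<mu> * S2"
    proof -
      have "(\<lambda>p. w p * Y p * Y p) = (\<lambda>p. w p * (bv p \<bullet> (v, 0)) * Y p - \<mu> * (wn p * Y p))"
      proof
        fix p :: "(int^'d) \<times> nat"
        have e: "bv p \<bullet> (v, 0) = Y p + \<mu> * real (snd p)" by (simp add: Y_def bv_def)
        show "w p * Y p * Y p = w p * (bv p \<bullet> (v, 0)) * Y p - \<mu> * (wn p * Y p)"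
          unfolding e wn_def by (simp add: algebra_simps)
      qed
      then have "Psi (\<lambda>p. w p * Y p * Y p) (0, lam 0) = Psi (\<lambda>p. w p * (bv p \<bullet> (v, 0)) * Y p - \<mu> * (wn p * Y p)) (0, lam 0)"
        by simp
      also have "\<dots> = S1 - \<mu> * S2"
        using Psi_diff[OF g1 good_cmult[OF g2] nz0] by (simp add: S1_def S2_def Psi_cmult)
      finally show ?thesis .
    qed
    have Qpos: "Psi (\<lambda>p. w p * Y p * Y p) (0, lam 0) > 0"
    proof -
      have "(v, - \<mu>) \<noteq> 0" using v by (simp add: zero_prod_def)
      then obtain x2 n2 where q: "f x2 n2 > 0" "v \<bullet> zvec x2 + (- \<mu>) * real n2 \<noteq> 0"
        using nondegenerate[of v "- \<mu>" 0] by blast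
      define q where "q = (x2, n2)"
      have Yq: "Y q \<noteq> 0" using q(2) by (simp add: Y_def q_def bv_def inner_commute)
      have wq: "w q > 0" using q(1) by (simp add: w_def q_def)
      have gYY: "good (\<lambda>p. w p * Y p * Y p) \<nu>"
        unfolding Y_def by (rule good_mult[OF good_mult[OF good_w]])
      have "w q * Y q * Y q * exp (bv q \<bullet> (0, lam 0)) \<le> Psi (\<lambda>p. w p * Y p * Y p) (0, lam 0)"
        by (rule Psi_ge_term[OF gYY nz0]) (simp add: wnn mult.assoc)
      moreover have "w q * Y q * Y q * exp (bv q \<bullet> (0, lam 0)) > 0"
      proof -
        have YY: "Y q * Y q > 0" using Yq by (auto simp: zero_less_mult_iff linorder_neq_iff)
        have P: "0 < (w q * (Y q * Y q)) * exp (bv q \<bullet> (0, lam 0))"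
          by (rule mult_pos_pos[OF mult_pos_pos[OF wq YY] exp_gt_zero])
        then show ?thesis by (simp only: mult.assoc)
      qed
      ultimately show ?thesis by linarith
    qed
    show "v \<bullet> (H *v v) > 0"
      using Hv DGv Qeq Qpos \<tau> by simp
  qed
  show ?thesis using hess pd by blast
qed

end
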